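(* Suppose the filtered vector space $(V,\ell)$ satisfies the best approximation property. Then $V$ has a basis which is $\ell$-orthogonal. Moreover, if $W\le V$ is a subspace and $S$ is an $\ell$-orthogonal basis of $W$, then there is an $\ell$-orthogonal basis of $V$ containing $S$.
   Context: A filtered vector space over a field $\kappa$ is a pair $(V,\ell)$ with $V$ a $\kappa$-vector space and $\ell\colon V\to\mathbb{R}\cup\{-\infty\}$ such that $\ell(v)=-\infty$ iff $v=0$, $\ell(cv)=\ell(v)$ for $c\in\kappa\setminus\{0\}$, and $\ell(v+w)\le\max\{\ell(v),\ell(w)\}$. A subset $S\subset V\setminus\{0\}$ is $\ell$-orthogonal if $\ell(\sum_{i=1}^n c_iv_i)=\max\{\ell(v_i):c_i\neq0\}$ for all finitely many distinct $v_1,\dots,v_n\in S$ and $c_i\in\kappa$. $(V,\ell)$ satisfies the best approximation property if for every proper subspace $W\subsetneq V$ and every $v\in V\setminus W$ there is $w_0\in W$ with $\ell(v-w_0)\le\ell(v-w)$ for all $w\in W$. *)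

theory Defs
  imports Complex_Main "HOL-Library.Extended_Real"
begin

definition filtered_vector_space ::
  "('k::field \<Rightarrow> 'v::ab_group_add \<Rightarrow> 'v) \<Rightarrow> ('v \<Rightarrow> ereal) \<Rightarrow> bool" where
  "filtered_vector_space scale l \<longleftrightarrow>
     vector_space scale \<and>
     (\<forall>v. l v \<noteq> \<infinity>) \<and>
     (\<forall>v. l v = -\<infinity> \<longleftrightarrow> v = 0) \<and>
     (\<forall>c v. c \<noteq> 0 \<longrightarrow> l (scale c v) = l v) \<and>
     (\<forall>v w. l (v + w) \<le> max (l v) (l w))"

text \<open>l-orthogonal subsets: for finitely many distinct elements of S and any
  coefficients, l of the linear combination is the maximum of l over those
  elements with nonzero coefficient (the empty maximum being -infinity).\<close>

definition l_orthogonal ::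
  "('k::field \<Rightarrow> 'v::ab_group_add \<Rightarrow> 'v) \<Rightarrow> ('v \<Rightarrow> ereal) \<Rightarrow> 'v set \<Rightarrow> bool" where
  "l_orthogonal scale l S \<longleftrightarrow>
     S \<subseteq> UNIV - {0} \<and>
     (\<forall>T c. finite T \<longrightarrow> T \<subseteq> S \<longrightarrow>
        l (\<Sum>v\<in>T. scale (c v) v) = (SUP v\<in>{v\<in>T. c v \<noteq> 0}. l v))"

definition best_approximation_property ::
  "('k::field \<Rightarrow> 'v::ab_group_add \<Rightarrow> 'v) \<Rightarrow> ('v \<Rightarrow> ereal) \<Rightarrow> bool" where
  "best_approximation_property scale l \<longleftrightarrow>
     (\<forall>W v. module.subspace scale W \<longrightarrow> W \<noteq> UNIV \<longrightarrow> v \<notin> W \<longrightarrow>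
        (\<exists>w0\<in>W. \<forall>w\<in>W. l (v - w0) \<le> l (v - w)))"

end

theory Submission
  imports Defs
begin

locale fvs = vector_space scale
  for scale :: "'k::field \<Rightarrow> 'v::ab_group_add \<Rightarrow> 'v" +
  fixes l :: "'v \<Rightarrow> ereal"
  assumes l0: "\<And>v. l v = -\<infinity> \<longleftrightarrow> v = 0"
    and lscale: "\<And>c v. c \<noteq> 0 \<Longrightarrow> l (scale c v) = l v"
    and ltri: "\<And>v w. l (v + w) \<le> max (l v) (l w)"
    and bap: "best_approximation_property scale l"
begin

lemma lneg: "l (- v) = l v"
  using lscale[of "-1" v] by simp

lemma lstrict: assumes "l a < l b" shows "l (a + b) = l b"
proof -
  have "l b = l ((a + b) + (- a))" by simp
  also have "\<dots> \<le> max (l (a + b)) (l a)" using ltri lneg by metis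
  finally have "l b \<le> l (a + b)" using assms by (auto simp: max_def split: if_splits)
  moreover have "l (a + b) \<le> l b" using ltri[of a b] assms by simp
  ultimately show ?thesis by simp
qed

lemma orth_indep: assumes "l_orthogonal scale l M" shows "independent M"
  unfolding independent_explicit_module
proof (intro allI impI)
  fix t u v assume t: "finite t" "t \<subseteq> M" "(\<Sum>v\<in>t. scale (u v) v) = 0" "v \<in> t"
  show "u v = 0"
  proof (rule ccontr)
    assume nz: "u v \<noteq> 0"
    have orthM: "\<forall>T c. finite T \<longrightarrow> T \<subseteq> M \<longrightarrow>
        l (\<Sum>v\<in>T. scale (c v) v) = (SUP v\<in>{v\<in>T. c v \<noteq> 0}. l v)"
      and M0: "M \<subseteq> UNIV - {0}"
      using assms unfolding l_orthogonal_def by auto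
    have e1: "l (\<Sum>v\<in>t. scale (u v) v) = (SUP v\<in>{v\<in>t. u v \<noteq> 0}. l v)"
      using orthM t(1,2) by blast
    have e2: "l v \<le> (SUP v\<in>{v\<in>t. u v \<noteq> 0}. l v)"
      using nz t by (intro SUP_upper) auto
    have "v \<noteq> 0" using M0 t by blast
    then have e3: "l v \<noteq> -\<infinity>" using l0 by simp
    have e4: "l (\<Sum>v\<in>t. scale (u v) v) = -\<infinity>" using t l0 by simp
    from e1 e2 e4 have "l v \<le> -\<infinity>" by simp
    then show False using e3 by simp
  qed
qed

lemma step:
  assumes orth: "l_orthogonal scale l M" and ns: "span M \<noteq> UNIV"
  shows "\<exists>u. u \<notin> span M \<and> l_orthogonal scale l (insert u M)"
proof -
  obtain v where v: "v \<notin> span M" using ns by blast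
  have "\<exists>w0\<in>span M. \<forall>w\<in>span M. l (v - w0) \<le> l (v - w)"
    using bap v ns subspace_span unfolding best_approximation_property_def by blast
  then obtain w0 where w0: "w0 \<in> span M" "\<And>w. w \<in> span M \<Longrightarrow> l (v - w0) \<le> l (v - w)"
    by blast
  define u where "u = v - w0"
  have uns: "u \<notin> span M"
  proof
    assume "u \<in> span M"
    then have "u + w0 \<in> span M" using w0 span_add by blast
    then show False using v u_def by simp
  qed
  have ge: "l u \<le> l (u + x)" if "x \<in> span M" for x
  proof -
    have "w0 - x \<in> span M" using that w0 span_diff by blast
    then have "l (v - w0) \<le> l (v - (w0 - x))" using w0 by blast
    then show ?thesis by (simp add: u_def algebra_simps)
  qed
  have key1: "l (u + x) = max (l x) (l u)" if "x \<in> span M" for x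
  proof (cases "l u < l x")
    case True
    then show ?thesis using lstrict[of u x] by (simp add: add.commute)
  next
    case False
    then have "l (u + x) \<le> l u" using ltri[of u x] by (simp add: max_def)
    then show ?thesis using ge[OF that] False by (auto simp: max_def not_less)
  qed
  have key: "l (x + scale c u) = max (l x) (l u)" if "x \<in> span M" "c \<noteq> 0" for x c
  proof -
    have "x + scale c u = scale c (u + scale (inverse c) x)"
      using that by (simp add: scale_right_distrib add.commute)
    then have "l (x + scale c u) = l (u + scale (inverse c) x)" using lscale that by simp
    also have "\<dots> = max (l (scale (inverse c) x)) (l u)"
      using key1 span_scale that by blast
    also have "\<dots> = max (l x) (l u)" using lscale that by simp
    finally show ?thesis .
  qed
  have "l_orthogonal scale l (insert u M)"
    unfolding l_orthogonal_def
  proof (intro conjI allI impI)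
    show "insert u M \<subseteq> UNIV - {0}" using orth uns span_zero unfolding l_orthogonal_def by auto
  next
    fix T c assume T: "finite T" "T \<subseteq> insert u M"
    define T' where "T' = T - {u}"
    have T': "finite T'" "T' \<subseteq> M" using T T'_def by auto
    define x where "x = (\<Sum>v\<in>T'. scale (c v) v)"
    have xs: "x \<in> span M" unfolding x_def using T' by (intro span_sum span_scale span_base) auto
    have lx: "l x = (SUP v\<in>{v\<in>T'. c v \<noteq> 0}. l v)"
      using orth T' unfolding l_orthogonal_def x_def by blast
    show "l (\<Sum>v\<in>T. scale (c v) v) = (SUP v\<in>{v\<in>T. c v \<noteq> 0}. l v)"
    proof (cases "u \<in> T \<and> c u \<noteq> 0")
      case True
      have "(\<Sum>v\<in>T. scale (c v) v) = x + scale (c u) u"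
        unfolding x_def T'_def using True T sum.remove[of T u] by (simp add: add.commute)
      moreover have "{v\<in>T. c v \<noteq> 0} = insert u {v\<in>T'. c v \<noteq> 0}" using True T'_def by auto
      ultimately show ?thesis using key[OF xs, of "c u"] True lx
        by (simp add: sup_max max.commute)
    next
      case False
      have "(\<Sum>v\<in>T. scale (c v) v) = x"
      proof (cases "u \<in> T")
        case True
        then show ?thesis unfolding x_def T'_def using False T sum.remove[of T u "\<lambda>v. scale (c v) v"] by simp
      next
        case False
        then show ?thesis unfolding x_def T'_def by simp
      qed
      moreover have "{v\<in>T. c v \<noteq> 0} = {v\<in>T'. c v \<noteq> 0}" using False T'_def by auto
      ultimately show ?thesis using lx by simp
    qed
  qed
  then show ?thesis using uns by blast
qed

lemma extend:
  assumes "l_orthogonal scale l S"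
  shows "\<exists>B. independent B \<and> span B = UNIV \<and> l_orthogonal scale l B \<and> S \<subseteq> B"
proof -
  define A where "A = {B. S \<subseteq> B \<and> l_orthogonal scale l B}"
  have "\<exists>M\<in>A. \<forall>X\<in>A. M \<subseteq> X \<longrightarrow> X = M"
  proof (rule subset_Zorn_nonempty)
    show "A \<noteq> {}" using assms unfolding A_def by blast
  next
    fix C assume C: "C \<noteq> {}" "subset.chain A C"
    have CA: "C \<subseteq> A" using C unfolding subset.chain_def by blast
    have CS: "\<And>B. B \<in> C \<Longrightarrow> S \<subseteq> B" using CA unfolding A_def by blast
    have CO: "\<And>B. B \<in> C \<Longrightarrow> l_orthogonal scale l B" using CA unfolding A_def by blast
    have "l_orthogonal scale l (\<Union>C)" unfolding l_orthogonal_def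
    proof (intro conjI allI impI)
      show "\<Union>C \<subseteq> UNIV - {0}"
      proof
        fix x assume "x \<in> \<Union>C"
        then obtain B where "B \<in> C" "x \<in> B" by blast
        then show "x \<in> UNIV - {0}" using CO[of B] unfolding l_orthogonal_def by blast
      qed
    next
      fix T c assume T: "finite T" "T \<subseteq> \<Union>C"
      obtain B where B: "B \<in> C" "T \<subseteq> B" using finite_subset_Union_chain[OF T C] by blast
      have "l_orthogonal scale l B" using CO B by blast
      then show "l (\<Sum>v\<in>T. scale (c v) v) = (SUP v\<in>{v\<in>T. c v \<noteq> 0}. l v)"
        using T(1) B(2) unfolding l_orthogonal_def by blast
    qed
    moreover have "S \<subseteq> \<Union>C" using C(1) CS by blast
    ultimately show "\<Union>C \<in> A" unfolding A_def by blast
  qed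
  then obtain M where M: "M \<in> A" "\<And>X. X \<in> A \<Longrightarrow> M \<subseteq> X \<Longrightarrow> X = M" by blast
  have MS: "S \<subseteq> M" and MO: "l_orthogonal scale l M" using M(1) unfolding A_def by auto
  have "span M = UNIV"
  proof (rule ccontr)
    assume "span M \<noteq> UNIV"
    then obtain u where u: "u \<notin> span M" "l_orthogonal scale l (insert u M)"
      using step[OF MO] by blast
    then have "insert u M \<in> A" using MS unfolding A_def by blast
    then have "insert u M = M" using M(2) by blast
    then show False using u(1) span_base by blast
  qed
  then show ?thesis using MS MO orth_indep by blast
qed

end

theorem proposition3p7:
  fixes scale :: "'k::field \<Rightarrow> 'v::ab_group_add \<Rightarrow> 'v"
    and l :: "'v \<Rightarrow> ereal"
  assumes "filtered_vector_space scale l"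
    and "best_approximation_property scale l"
  shows "(\<exists>B. \<not> module.dependent scale B \<and> module.span scale B = UNIV
              \<and> l_orthogonal scale l B)
       \<and> (\<forall>W S. module.subspace scale W \<longrightarrow> S \<subseteq> W \<longrightarrow> \<not> module.dependent scale S
              \<longrightarrow> module.span scale S = W \<longrightarrow> l_orthogonal scale l S \<longrightarrow>
              (\<exists>B. \<not> module.dependent scale B \<and> module.span scale B = UNIV
                   \<and> l_orthogonal scale l B \<and> S \<subseteq> B))"
proof -
  interpret fvs scale l
    using assms unfolding filtered_vector_space_def by (intro fvs.intro fvs_axioms.intro) auto
  have "l_orthogonal scale l {}"
    unfolding l_orthogonal_def using l0 by (simp add: bot_ereal_def)
  then show ?thesis using extend by blast
qed

end
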